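(* Let $N\in\mathbb{N}$ and let $\{g_1,\ldots,g_h\}$ be a generating set for $\Gamma_1(N)$. For $i=1,\ldots,h$, let $\gamma_i\in\langle T,W\rangle g_i\langle T,W\rangle$ be a matrix with top row $(r_i\ \ b_i)$, and choose $m_i\in\mathbb{Z}$ with $m_i\mid\frac{r_i-1}N$. Then for any $q\in\mathbb{N}$ satisfying $(q,Nm_i)=1$ and $q\equiv Nm_ib_i\pmod{r_i}$ for every $i$, we have $H_q\supseteq\Gamma_1(N)$.
   Context: $T=\begin{pmatrix}1&1\\0&1\end{pmatrix}$, $W=\begin{pmatrix}1&0\\N&1\end{pmatrix}$. For $q\in\mathbb{N}$ coprime to $N$, $H_q$ denotes the subgroup of $\Gamma_0(N)$ generated by all matrices $\begin{pmatrix}A&B\\C&D\end{pmatrix}\in\Gamma_0(N)$ with $A=q$. *)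

theory Defs
  imports Main "HOL-Number_Theory.Cong"
begin

datatype m2 = M2 (ma: int) (mb: int) (mc: int) (md: int)

fun m2mult :: "m2 \<Rightarrow> m2 \<Rightarrow> m2" (infixl "\<bullet>" 70) where
  "M2 a b c d \<bullet> M2 a' b' c' d' = M2 (a*a' + b*c') (a*b' + b*d') (c*a' + d*c') (c*b' + d*d')"

definition m2one :: m2 where "m2one = M2 1 0 0 1"

fun m2inv :: "m2 \<Rightarrow> m2" where
  "m2inv (M2 a b c d) = M2 d (-b) (-c) a"

definition m2det :: "m2 \<Rightarrow> int" where
  "m2det g = ma g * md g - mb g * mc g"

definition SL2Z :: "m2 set" where
  "SL2Z = {g. m2det g = 1}"

definition Gamma0 :: "int \<Rightarrow> m2 set" where
  "Gamma0 N = {g \<in> SL2Z. N dvd mc g}"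

definition Gamma1 :: "int \<Rightarrow> m2 set" where
  "Gamma1 N = {g \<in> SL2Z. N dvd mc g \<and> [ma g = 1] (mod N) \<and> [md g = 1] (mod N)}"

inductive_set gen_subgroup :: "m2 set \<Rightarrow> m2 set" for S where
  gen_one: "m2one \<in> gen_subgroup S"
| gen_base: "s \<in> S \<Longrightarrow> s \<in> gen_subgroup S"
| gen_mult: "x \<in> gen_subgroup S \<Longrightarrow> y \<in> gen_subgroup S \<Longrightarrow> x \<bullet> y \<in> gen_subgroup S"
| gen_inv: "x \<in> gen_subgroup S \<Longrightarrow> m2inv x \<in> gen_subgroup S"

definition Tm :: m2 where "Tm = M2 1 1 0 1"
definition Wm :: "int \<Rightarrow> m2" where "Wm N = M2 1 0 N 1"

definition TW :: "int \<Rightarrow> m2 set" where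
  "TW N = gen_subgroup {Tm, Wm N}"

definition double_coset :: "m2 set \<Rightarrow> m2 \<Rightarrow> m2 set" where
  "double_coset H g = {x \<bullet> g \<bullet> y | x y. x \<in> H \<and> y \<in> H}"

definition Hq :: "int \<Rightarrow> int \<Rightarrow> m2 set" where
  "Hq N q = gen_subgroup {g \<in> Gamma0 N. ma g = q}"

end

theory Submission
  imports Defs
begin

lemma gen_mono: assumes "S \<subseteq> gen_subgroup S'" "x \<in> gen_subgroup S" shows "x \<in> gen_subgroup S'"
  using assms(2) by induction (use assms(1) in \<open>auto intro: gen_subgroup.intros\<close>)

lemma m2_assoc: "(x \<bullet> y) \<bullet> z = x \<bullet> (y \<bullet> z)"
  by (cases x; cases y; cases z) (simp add: algebra_simps)

lemma m2_one_left: "m2one \<bullet> x = x"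
  by (cases x) (simp add: m2one_def)

lemma m2_one_right: "x \<bullet> m2one = x"
  by (cases x) (simp add: m2one_def)

lemma inv_left: "m2det x = 1 \<Longrightarrow> m2inv x \<bullet> x = m2one"
  by (cases x) (simp add: m2one_def m2det_def algebra_simps)

lemma inv_right: "m2det x = 1 \<Longrightarrow> x \<bullet> m2inv x = m2one"
  by (cases x) (simp add: m2one_def m2det_def algebra_simps)

lemma det_mult: "m2det (x \<bullet> y) = m2det x * m2det y"
  by (cases x; cases y) (simp add: m2det_def algebra_simps)

lemma det_inv: "m2det (m2inv x) = m2det x"
  by (cases x) (simp add: m2det_def algebra_simps)

lemma det_one: "m2det m2one = 1" by (simp add: m2det_def m2one_def)

lemma gen_det: assumes "S \<subseteq> SL2Z" "x \<in> gen_subgroup S" shows "m2det x = 1"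
  using assms(2) by induction (use assms(1) in \<open>auto simp: SL2Z_def det_one det_mult det_inv\<close>)

lemma Hq_gen: "A \<in> Gamma0 N \<Longrightarrow> ma A = q \<Longrightarrow> A \<in> Hq N q"
  unfolding Hq_def by (rule gen_base) simp

lemma Hq_det: "x \<in> Hq N q \<Longrightarrow> m2det x = 1"
  unfolding Hq_def by (rule gen_det) (auto simp: Gamma0_def)

lemma exA0:
  fixes q N y :: int
  assumes "coprime q (N*y)"
  shows "\<exists>x z. M2 q x (N*y) z \<in> Gamma0 N"
proof -
  obtain u v where "u * q + v * (N*y) = gcd q (N*y)" using bezout_int by blast
  with assms have uv: "u * q + v * (N*y) = 1" by simp
  have "M2 q (-v) (N*y) u \<in> Gamma0 N"
    using uv by (simp add: Gamma0_def SL2Z_def m2det_def algebra_simps)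
  then show ?thesis by blast
qed

lemma Hq_left:
  assumes "A0 \<in> Hq N q" "A0 \<bullet> X \<in> Hq N q"
  shows "X \<in> Hq N q"
proof -
  have "m2inv A0 \<bullet> (A0 \<bullet> X) = X"
    by (simp add: m2_assoc[symmetric] inv_left[OF Hq_det[OF assms(1)]] m2_one_left)
  moreover have "m2inv A0 \<bullet> (A0 \<bullet> X) \<in> Hq N q"
    using assms unfolding Hq_def by (blast intro: gen_mult gen_inv)
  ultimately show ?thesis by simp
qed

lemma Hq_right:
  assumes "A0 \<in> Hq N q" "X \<bullet> A0 \<in> Hq N q"
  shows "X \<in> Hq N q"
proof -
  have "(X \<bullet> A0) \<bullet> m2inv A0 = X"
    by (simp add: m2_assoc inv_right[OF Hq_det[OF assms(1)]] m2_one_right)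
  moreover have "(X \<bullet> A0) \<bullet> m2inv A0 \<in> Hq N q"
    using assms unfolding Hq_def by (blast intro: gen_mult gen_inv)
  ultimately show ?thesis by simp
qed

lemma Tpow_Hq:
  fixes q N :: int
  assumes "coprime q N"
  shows "M2 1 k 0 1 \<in> Hq N q"
proof -
  from exA0[of q N 1] assms obtain x z where A: "M2 q x N z \<in> Gamma0 N" by auto
  have "M2 q x N z \<bullet> M2 1 k 0 1 \<in> Gamma0 N"
    using A by (simp add: Gamma0_def SL2Z_def m2det_def algebra_simps)
  then have B: "M2 q x N z \<bullet> M2 1 k 0 1 \<in> Hq N q" by (rule Hq_gen) simp
  have A0: "M2 q x N z \<in> Hq N q" using A by (rule Hq_gen) simp
  show ?thesis by (rule Hq_left[OF A0 B])
qed

lemma W_Hq: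
  fixes q N :: int
  assumes "coprime q N"
  shows "Wm N \<in> Hq N q"
proof -
  from exA0[of q N 1] assms obtain x z where A: "M2 q x N z \<in> Gamma0 N" by auto
  have "Wm N \<bullet> M2 q x N z \<in> Gamma0 N"
    using A by (simp add: Wm_def Gamma0_def SL2Z_def m2det_def algebra_simps)
  then have B: "Wm N \<bullet> M2 q x N z \<in> Hq N q" by (rule Hq_gen) (simp add: Wm_def)
  have A0: "M2 q x N z \<in> Hq N q" using A by (rule Hq_gen) simp
  show ?thesis by (rule Hq_right[OF A0 B])
qed

lemma TW_Hq:
  fixes q N :: int
  assumes "coprime q N" "x \<in> TW N"
  shows "x \<in> Hq N q"
proof -
  have "{Tm, Wm N} \<subseteq> Hq N q"
    using Tpow_Hq[OF assms(1), of 1] W_Hq[OF assms(1)] by (simp add: Tm_def)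
  then show ?thesis using assms(2) unfolding TW_def Hq_def by (rule gen_mono)
qed

lemma gamma_Hq:
  fixes q N m :: int
  assumes N: "N \<ge> 1"
    and G: "\<gamma> \<in> Gamma1 N"
    and mdiv: "m dvd (ma \<gamma> - 1) div N"
    and cop: "coprime q (N * m)"
    and cg: "[q = N * m * mb \<gamma>] (mod ma \<gamma>)"
  shows "\<gamma> \<in> Hq N q"
proof -
  obtain r b c d where g: "\<gamma> = M2 r b c d" by (cases \<gamma>)
  from G g have det: "r*d - b*c = 1" and Nc: "N dvd c" and r1: "[r = 1] (mod N)"
    by (auto simp: Gamma1_def SL2Z_def m2det_def)
  from r1 obtain t where t: "r - 1 = N * t" by (auto simp: cong_iff_dvd_diff)
  have "(r - 1) div N = t" using t N by simp
  with mdiv g obtain s where s: "t = m * s" by auto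
  have rs: "r - 1 = N*m*s" using t s by simp
  from cg g have "r dvd q - N*m*b" by (simp add: cong_iff_dvd_diff)
  then have "r dvd (N*m*b - q) + q*r" by (metis dvd_minus_iff minus_diff_eq dvd_add dvd_triv_right)
  moreover have "(N*m*b - q) + q*r = (N*m) * (b + q*s)" using rs by (simp add: algebra_simps)
  ultimately have d1: "r dvd (N*m) * (b + q*s)" by simp
  have "coprime r (N*m)"
  proof (rule coprimeI)
    fix e assume "e dvd r" "e dvd N*m"
    then have "e dvd r - (N*m)*s" by (simp add: dvd_diff)
    then show "is_unit e" using rs by (simp add: algebra_simps)
  qed
  with d1 have "r dvd b + q*s" by (simp add: coprime_dvd_mult_right_iff)
  then obtain k0 where k0: "b + q*s = r*k0" by blast
  from exA0[OF cop] obtain x z where A0: "M2 q x (N*m) z \<in> Gamma0 N" by auto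
  have cqN: "coprime q N" using cop by simp
  have A0H: "M2 q x (N*m) z \<in> Hq N q" using A0 by (intro Hq_gen) auto
  define A where "A = M2 1 (-k0) 0 1 \<bullet> M2 q x (N*m) z"
  have AH: "A \<in> Hq N q" unfolding A_def Hq_def
    using Tpow_Hq[OF cqN] A0H unfolding Hq_def by (intro gen_mult)
  have "\<gamma> \<bullet> A \<in> Gamma0 N"
  proof -
    have "m2det (\<gamma> \<bullet> A) = 1" using det_mult Hq_det[OF AH] det g
      by (simp add: m2det_def)
    moreover have "N dvd mc (\<gamma> \<bullet> A)" using Nc by (simp add: g A_def)
    ultimately show ?thesis by (simp add: Gamma0_def SL2Z_def)
  qed
  moreover have "ma (\<gamma> \<bullet> A) = q"
  proof -
    have "ma (\<gamma> \<bullet> A) = r*q + N*m*(b - r*k0)" by (simp add: g A_def algebra_simps)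
    also have "\<dots> = r*q - N*m*(q*s)"
    proof -
      have e: "b - r*k0 = -(q*s)" using k0 by simp
      show ?thesis unfolding e by simp
    qed
    also have "\<dots> = q*(r - N*m*s)" by (simp add: algebra_simps)
    also have "\<dots> = q" using rs by simp
    finally show ?thesis .
  qed
  ultimately have "\<gamma> \<bullet> A \<in> Hq N q" by (rule Hq_gen)
  then show ?thesis using AH by (rule Hq_right[of A, rotated])
qed

theorem lemma4p13:
  fixes N :: nat and h :: nat and g \<gamma> :: "nat \<Rightarrow> m2" and m :: "nat \<Rightarrow> int" and q :: nat
  assumes "N \<ge> 1" and "q \<ge> 1"
    and gens: "gen_subgroup (g ` {1..h}) = Gamma1 (int N)"
    and gam: "\<forall>i\<in>{1..h}. \<gamma> i \<in> double_coset (TW (int N)) (g i)"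
    and mdiv: "\<forall>i\<in>{1..h}. m i dvd (ma (\<gamma> i) - 1) div int N"
    and cop: "\<forall>i\<in>{1..h}. coprime (int q) (int N * m i)"
    and cong: "\<forall>i\<in>{1..h}. [int q = int N * m i * mb (\<gamma> i)] (mod ma (\<gamma> i))"
  shows "Gamma1 (int N) \<subseteq> Hq (int N) (int q)"
proof -
  let ?G = "gen_subgroup (g ` {1..h})"
  have SL: "g ` {1..h} \<subseteq> SL2Z"
  proof
    fix x assume "x \<in> g ` {1..h}"
    then have "x \<in> ?G" by (rule gen_base)
    then show "x \<in> SL2Z" using gens by (simp add: Gamma1_def)
  qed
  have TWG: "x \<in> ?G" if "x \<in> TW (int N)" for x
  proof -
    have "Tm \<in> Gamma1 (int N)" by (simp add: Tm_def Gamma1_def SL2Z_def m2det_def)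
    moreover have "Wm (int N) \<in> Gamma1 (int N)" by (simp add: Wm_def Gamma1_def SL2Z_def m2det_def)
    ultimately have "{Tm, Wm (int N)} \<subseteq> ?G" unfolding gens by simp
    then show ?thesis using that unfolding TW_def by (rule gen_mono)
  qed
  have gi: "g i \<in> Hq (int N) (int q)" if i: "i \<in> {1..h}" for i
  proof -
    have cqN: "coprime (int q) (int N)" using cop i by simp
    from gam i have "\<gamma> i \<in> double_coset (TW (int N)) (g i)" by blast
    then obtain x y where xy: "x \<in> TW (int N)" "y \<in> TW (int N)" "\<gamma> i = x \<bullet> g i \<bullet> y"
      unfolding double_coset_def by blast
    have gG: "g i \<in> ?G" using i by (intro gen_base) auto
    have "\<gamma> i \<in> ?G" unfolding xy(3)
      by (rule gen_mult[OF gen_mult[OF TWG[OF xy(1)] gG] TWG[OF xy(2)]])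
    then have G1: "\<gamma> i \<in> Gamma1 (int N)" using gens by simp
    have md: "m i dvd (ma (\<gamma> i) - 1) div int N" using mdiv i by blast
    have cp: "coprime (int q) (int N * m i)" using cop i by blast
    have cg: "[int q = int N * m i * mb (\<gamma> i)] (mod ma (\<gamma> i))" using cong i by blast
    have N1: "int N \<ge> 1" using assms(1) by simp
    have gH: "\<gamma> i \<in> Hq (int N) (int q)"
      by (rule gamma_Hq[OF N1 G1 md cp cg])
    have dx: "m2det x = 1" using gen_det[OF SL TWG[OF xy(1)]] .
    have dy: "m2det y = 1" using gen_det[OF SL TWG[OF xy(2)]] .
    have "m2inv x \<bullet> \<gamma> i \<bullet> m2inv y = g i"
      by (simp add: xy(3) m2_assoc inv_right[OF dy] m2_one_right)
         (simp add: m2_assoc[symmetric] inv_left[OF dx] m2_one_left)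
    moreover have "m2inv x \<bullet> \<gamma> i \<bullet> m2inv y \<in> Hq (int N) (int q)"
      using gH TW_Hq[OF cqN xy(1)] TW_Hq[OF cqN xy(2)] unfolding Hq_def
      by (intro gen_mult gen_inv)
    ultimately show ?thesis by simp
  qed
  have "x \<in> Hq (int N) (int q)" if "x \<in> ?G" for x
  proof -
    have "g ` {1..h} \<subseteq> Hq (int N) (int q)" using gi by blast
    then show ?thesis using that unfolding Hq_def by (rule gen_mono)
  qed
  then show ?thesis using gens by auto
qed

end
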